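(* Let $\mathcal{H}$ be a complex Hilbert space and $B,C\in\mathcal{B}(\mathcal{H})$. If $$w^2\left(\begin{bmatrix}0 & B\\ C & 0\end{bmatrix}\right)=\frac14\max\left\{\big\||B|^2+|C^*|^2\big\|,\ \big\||B^*|^2+|C|^2\big\|\right\},$$ then $\|B+C^*\|=\|B-C^*\|$.
   Context: $\mathcal{B}(\mathcal{H})$ is the algebra of bounded linear operators on $\mathcal{H}$ with operator norm $\|\cdot\|$. For $A\in\mathcal{B}(\mathcal{H})$, $A^*$ is the adjoint, $|A|=(A^*A)^{1/2}$, $|A^*|=(AA^* )^{1/2}$, and $w(A)=\sup_{\|x\|=1}|\langle Ax,x\rangle|$ is the numerical radius. The operator matrix $\begin{bmatrix}A&B\\C&D\end{bmatrix}$ acts on $\mathcal{H}\oplus\mathcal{H}$ by $(x_1,x_2)\mapsto(Ax_1+Bx_2,\,Cx_1+Dx_2)$; $0$ denotes the zero operator. *)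

theory Defs
  imports "HOL-Analysis.Analysis"
begin

class complex_inner_space = ab_group_add +
  fixes scaleC :: "complex \<Rightarrow> 'a \<Rightarrow> 'a"
    and cinner :: "'a \<Rightarrow> 'a \<Rightarrow> complex"
  assumes scaleC_add_right: "scaleC a (x + y) = scaleC a x + scaleC a y"
    and scaleC_add_left: "scaleC (a + b) x = scaleC a x + scaleC b x"
    and scaleC_scaleC: "scaleC a (scaleC b x) = scaleC (a * b) x"
    and scaleC_one: "scaleC 1 x = x"
    and cinner_add_left: "cinner (x + y) z = cinner x z + cinner y z"
    and cinner_scaleC_left: "cinner (scaleC a x) y = a * cinner x y"
    and cinner_commute: "cinner y x = cnj (cinner x y)"
    and cinner_ge_zero: "0 \<le> Re (cinner x x)"
    and cinner_eq_zero_iff: "cinner x x = 0 \<longleftrightarrow> x = 0"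

definition cnorm :: "'a::complex_inner_space \<Rightarrow> real" where
  "cnorm x = sqrt (Re (cinner x x))"

class chilbert_space = complex_inner_space +
  assumes cinner_complete:
    "(\<forall>e>0. \<exists>N. \<forall>m\<ge>N. \<forall>n\<ge>N. sqrt (Re (cinner (X m - X n) (X m - X n))) < e)
      \<Longrightarrow> \<exists>L. (\<lambda>n. sqrt (Re (cinner (X n - L) (X n - L)))) \<longlonglongrightarrow> 0"

instantiation prod :: (complex_inner_space, complex_inner_space) complex_inner_space
begin
definition scaleC_prod_def: "scaleC a p = (scaleC a (fst p), scaleC a (snd p))"
definition cinner_prod_def: "cinner p q = cinner (fst p) (fst q) + cinner (snd p) (snd q)"
instance
proof
  fix a b :: complex and x y z :: "'a \<times> 'b"
  show "scaleC a (x + y) = scaleC a x + scaleC a y"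
    by (simp add: scaleC_prod_def scaleC_add_right)
  show "scaleC (a + b) x = scaleC a x + scaleC b x"
    by (simp add: scaleC_prod_def scaleC_add_left)
  show "scaleC a (scaleC b x) = scaleC (a * b) x"
    by (simp add: scaleC_prod_def scaleC_scaleC)
  show "scaleC 1 x = x"
    by (simp add: scaleC_prod_def scaleC_one)
  show "cinner (x + y) z = cinner x z + cinner y z"
    by (simp add: cinner_prod_def cinner_add_left algebra_simps)
  show "cinner (scaleC a x) y = a * cinner x y"
    by (simp add: cinner_prod_def scaleC_prod_def cinner_scaleC_left algebra_simps)
  show "cinner y x = cnj (cinner x y)"
    by (simp add: cinner_prod_def cinner_commute[of "fst x"] cinner_commute[of "snd x"])
  show "0 \<le> Re (cinner x x)"
    by (simp add: cinner_prod_def cinner_ge_zero add_nonneg_nonneg)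
  show "cinner x x = 0 \<longleftrightarrow> x = 0"
  proof
    assume h: "cinner x x = 0"
    have r: "Re (cinner (fst x) (fst x)) + Re (cinner (snd x) (snd x)) = 0"
      using arg_cong[OF h[unfolded cinner_prod_def], of Re] by simp
    have "Re (cinner (fst x) (fst x)) = 0" "Re (cinner (snd x) (snd x)) = 0"
      using r cinner_ge_zero[of "fst x"] cinner_ge_zero[of "snd x"] by linarith+
    moreover have "Im (cinner (fst x) (fst x)) = 0" "Im (cinner (snd x) (snd x)) = 0"
      using cinner_commute[of "fst x" "fst x"] cinner_commute[of "snd x" "snd x"]
      by (metis cnj.sel(2) complex.expand equation_minus_iff neg_equal_zero)+
    ultimately have "cinner (fst x) (fst x) = 0" "cinner (snd x) (snd x) = 0"
      by (simp_all add: complex_eq_iff)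
    then show "x = 0" by (simp add: cinner_eq_zero_iff prod_eq_iff)
  next
    assume "x = 0"
    have "cinner (0::'a) 0 = 0" "cinner (0::'b) 0 = 0" by (simp_all add: cinner_eq_zero_iff)
    then show "cinner x x = 0" using \<open>x = 0\<close> by (simp add: cinner_prod_def)
  qed
qed
end

definition cbounded_linear :: "('a::complex_inner_space \<Rightarrow> 'b::complex_inner_space) \<Rightarrow> bool" where
  "cbounded_linear A \<longleftrightarrow>
     (\<forall>x y. A (x + y) = A x + A y) \<and> (\<forall>a x. A (scaleC a x) = scaleC a (A x)) \<and>
     (\<exists>K. \<forall>x. cnorm (A x) \<le> K * cnorm x)"

definition adj :: "('a::complex_inner_space \<Rightarrow> 'a) \<Rightarrow> ('a \<Rightarrow> 'a)" where
  "adj A = (THE A'. \<forall>x y. cinner (A x) y = cinner x (A' y))"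

definition opnorm :: "('a::complex_inner_space \<Rightarrow> 'a) \<Rightarrow> real" where
  "opnorm A = Sup {cnorm (A x) | x. cnorm x \<le> 1}"

text \<open>Numerical radius w(A) = sup of |<A x, x>| over unit vectors (taken over the
closed unit ball, which gives the same value and avoids an empty sup on the zero space).\<close>
definition numrad :: "('a::complex_inner_space \<Rightarrow> 'a) \<Rightarrow> real" where
  "numrad A = Sup {cmod (cinner (A x) x) | x. cnorm x \<le> 1}"

definition opmatrix ::
  "('a::complex_inner_space \<Rightarrow> 'a) \<Rightarrow> ('a \<Rightarrow> 'a) \<Rightarrow> ('a \<Rightarrow> 'a) \<Rightarrow> ('a \<Rightarrow> 'a) \<Rightarrow> ('a \<times> 'a \<Rightarrow> 'a \<times> 'a)" where
  "opmatrix A B C D = (\<lambda>(x1, x2). (A x1 + B x2, C x1 + D x2))"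

end

theory Submission
  imports Defs
begin


lemma scaleC_zero_left[simp]: "scaleC 0 (x::'a::complex_inner_space) = 0"
proof -
  have "scaleC 0 x + scaleC 0 x = scaleC 0 x" by (simp add: scaleC_add_left[symmetric])
  then show ?thesis by simp
qed

lemma scaleC_zero_right[simp]: "scaleC a (0::'a::complex_inner_space) = 0"
proof -
  have "scaleC a 0 + scaleC a 0 = scaleC a (0::'a)" by (simp add: scaleC_add_right[symmetric])
  then show ?thesis by simp
qed

lemma scaleC_minus_left: "scaleC (-a) (x::'a::complex_inner_space) = - scaleC a x"
proof -
  have "scaleC (-a) x + scaleC a x = 0" by (simp add: scaleC_add_left[symmetric])
  then show ?thesis by (simp add: eq_neg_iff_add_eq_0)
qed

lemma scaleC_minus_right: "scaleC a (-x::'a::complex_inner_space) = - scaleC a x"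
proof -
  have "scaleC a (-x) + scaleC a x = 0" by (simp add: scaleC_add_right[symmetric])
  then show ?thesis by (simp add: eq_neg_iff_add_eq_0)
qed

lemma scaleC_diff_right: "scaleC a (x - y::'a::complex_inner_space) = scaleC a x - scaleC a y"
  using scaleC_add_right[of a x "-y"] by (simp add: scaleC_minus_right)

lemma scaleC_diff_left: "scaleC (a - b) (x::'a::complex_inner_space) = scaleC a x - scaleC b x"
  using scaleC_add_left[of a "-b" x] by (simp add: scaleC_minus_left)

lemma cinner_zero_left[simp]: "cinner (0::'a::complex_inner_space) y = 0"
proof -
  have "cinner (0::'a) y + cinner 0 y = cinner 0 y" by (simp add: cinner_add_left[symmetric])
  then show ?thesis by simp
qed

lemma cinner_zero_right[simp]: "cinner (x::'a::complex_inner_space) 0 = 0"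
  using cinner_commute[of x 0] by simp

lemma cinner_add_right: "cinner (x::'a::complex_inner_space) (y + z) = cinner x y + cinner x z"
  using cinner_commute[of x "y+z"] cinner_commute[of y x] cinner_commute[of z x] by (simp add: cinner_add_left)

lemma cinner_scaleC_right: "cinner (x::'a::complex_inner_space) (scaleC a y) = cnj a * cinner x y"
  using cinner_commute[of x "scaleC a y"] cinner_commute[of y x] by (simp add: cinner_scaleC_left)

lemma cinner_minus_left: "cinner (- x::'a::complex_inner_space) y = - cinner x y"
proof -
  have "cinner (-x) y + cinner x y = 0" by (simp add: cinner_add_left[symmetric])
  then show ?thesis by (simp add: eq_neg_iff_add_eq_0)
qed

lemma cinner_minus_right: "cinner (x::'a::complex_inner_space) (- y) = - cinner x y"
  using cinner_commute[of x "-y"] cinner_commute[of y x] by (simp add: cinner_minus_left)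

lemma cinner_diff_left: "cinner (x - y::'a::complex_inner_space) z = cinner x z - cinner y z"
  using cinner_add_left[of x "-y" z] by (simp add: cinner_minus_left)

lemma cinner_diff_right: "cinner (x::'a::complex_inner_space) (y - z) = cinner x y - cinner x z"
  using cinner_add_right[of x y "-z"] by (simp add: cinner_minus_right)

lemma cinner_self_Im: "Im (cinner (x::'a::complex_inner_space) x) = 0"
proof -
  have "Im (cinner x x) = - Im (cinner x x)" using arg_cong[OF cinner_commute[of x x], of Im] by simp
  then show ?thesis by simp
qed

lemma cinner_self_real: "cinner (x::'a::complex_inner_space) x = complex_of_real (Re (cinner x x))"
  using cinner_self_Im[of x] by (simp add: complex_eq_iff)

lemma cnorm_ge0[simp]: "0 \<le> cnorm x"
  by (simp add: cnorm_def cinner_ge_zero)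

lemma cnorm_sq: "(cnorm x)^2 = Re (cinner x x)"
  by (simp add: cnorm_def cinner_ge_zero)

lemma cinner_self_cnorm: "cinner x x = complex_of_real ((cnorm x)^2)"
  by (metis cinner_self_real cnorm_sq)

lemma cnorm_zero[simp]: "cnorm (0::'a::complex_inner_space) = 0"
  by (simp add: cnorm_def)

lemma cnorm_eq_0: "cnorm (x::'a::complex_inner_space) = 0 \<longleftrightarrow> x = 0"
proof -
  have "cnorm x = 0 \<longleftrightarrow> Re (cinner x x) = 0" by (simp add: cnorm_def cinner_ge_zero)
  also have "\<dots> \<longleftrightarrow> cinner x x = 0" using cinner_self_Im[of x] by (simp add: complex_eq_iff)
  finally show ?thesis by (simp add: cinner_eq_zero_iff)
qed

lemma cnorm_scaleC: "cnorm (scaleC a (x::'a::complex_inner_space)) = cmod a * cnorm x"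
proof -
  have "cinner (scaleC a x) (scaleC a x) = a * cnj a * cinner x x"
    by (simp add: cinner_scaleC_left cinner_scaleC_right)
  also have "a * cnj a = complex_of_real ((cmod a)^2)" by (metis complex_norm_square of_real_power)
  finally have "Re (cinner (scaleC a x) (scaleC a x)) = (cmod a)^2 * (cnorm x)^2"
    by (simp add: cinner_self_cnorm)
  then have "(cnorm (scaleC a x))^2 = (cmod a * cnorm x)^2" by (simp add: cnorm_sq power_mult_distrib)
  then show ?thesis by (simp add: power2_eq_iff_nonneg)
qed

lemma cnorm_minus: "cnorm (- (x::'a::complex_inner_space)) = cnorm x"
  by (simp add: cnorm_def cinner_minus_left cinner_minus_right)

lemma cnorm_sub_commute: "cnorm ((x::'a::complex_inner_space) - y) = cnorm (y - x)"
  using cnorm_minus[of "x - y"] by simp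

lemma cinner_expand_sq: "Re (cinner (x + y) (x + y)) = (cnorm x)^2 + 2 * Re (cinner x (y::'a::complex_inner_space)) + (cnorm y)^2"
proof -
  have "cinner (x + y) (x + y) = cinner x x + cinner x y + cinner y x + cinner y y"
    by (simp add: cinner_add_left cinner_add_right)
  moreover have "Re (cinner y x) = Re (cinner x y)" using cinner_commute[of y x] by simp
  ultimately show ?thesis by (simp add: cnorm_sq)
qed

lemma cauchy_schwarz: "cmod (cinner (x::'a::complex_inner_space) y) \<le> cnorm x * cnorm y"
proof (cases "y = 0")
  case True then show ?thesis by simp
next
  case False
  define n where "n = (cnorm y)^2"
  have n0: "n > 0" using False cnorm_eq_0[of y] cnorm_ge0[of y] unfolding n_def by simp
  define t where "t = cinner x y / complex_of_real n"
  have "0 \<le> Re (cinner (x - scaleC t y) (x - scaleC t y))" by (rule cinner_ge_zero)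
  also have "cinner (x - scaleC t y) (x - scaleC t y) = cinner x x - cnj t * cinner x y - t * cinner y x + t * cnj t * cinner y y"
    by (simp add: cinner_diff_left cinner_diff_right cinner_scaleC_left cinner_scaleC_right algebra_simps)
  also have "\<dots> = cinner x x - complex_of_real ((cmod (cinner x y))^2 / n)"
  proof -
    have yy: "cinner y y = complex_of_real n" by (simp add: n_def cinner_self_cnorm)
    have yx: "cinner y x = cnj (cinner x y)" by (rule cinner_commute)
    have m: "cinner x y * cnj (cinner x y) = complex_of_real ((cmod (cinner x y))^2)" by (metis complex_norm_square of_real_power)
    show ?thesis unfolding yy yx t_def using n0 m
      by (simp add: field_simps power2_eq_square)
  qed
  finally have "(cmod (cinner x y))^2 / n \<le> (cnorm x)^2" by (simp add: cnorm_sq)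
  then have "(cmod (cinner x y))^2 \<le> (cnorm x * cnorm y)^2" using n0 by (simp add: n_def field_simps power_mult_distrib)
  then show ?thesis by (rule power2_le_imp_le) simp
qed

lemma cnorm_triangle: "cnorm ((x::'a::complex_inner_space) + y) \<le> cnorm x + cnorm y"
proof -
  have "Re (cinner x y) \<le> cnorm x * cnorm y" using cauchy_schwarz[of x y] complex_Re_le_cmod[of "cinner x y"] by linarith
  moreover have "(cnorm (x+y))^2 = (cnorm x)^2 + 2*Re(cinner x y) + (cnorm y)^2"
    using cnorm_sq[of "x+y"] cinner_expand_sq[of x y] by simp
  ultimately have "(cnorm (x+y))^2 \<le> (cnorm x + cnorm y)^2"
    by (simp add: power2_sum)
  then show ?thesis by (rule power2_le_imp_le) simp
qed

lemma cnorm_diff_triangle: "cnorm ((x::'a::complex_inner_space) - y) \<le> cnorm x + cnorm y"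
  using cnorm_triangle[of x "-y"] by (simp add: cnorm_minus)

lemma parallelogram: "(cnorm ((x::'a::complex_inner_space) + y))^2 + (cnorm (x - y))^2 = 2 * (cnorm x)^2 + 2 * (cnorm y)^2"
proof -
  have "Re (cinner (x - y) (x - y)) = (cnorm x)^2 - 2 * Re (cinner x y) + (cnorm y)^2"
    using cinner_expand_sq[of x "-y"] by (simp add: cinner_minus_right cnorm_minus)
  then show ?thesis using cinner_expand_sq[of x y] cnorm_sq[of "x+y"] cnorm_sq[of "x-y"] by simp
qed



lemma cinner_ext_right:
  assumes "\<And>x. cinner x a = cinner x (b::'a::complex_inner_space)"
  shows "a = b"
proof -
  have "cinner (a - b) (a - b) = 0" using assms[of "a-b"] by (simp add: cinner_diff_right)
  then show ?thesis by (simp add: cinner_eq_zero_iff)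
qed

lemma aux48: "(a::real) \<le> c \<Longrightarrow> b \<le> c \<Longrightarrow> 4 * (a + b) \<le> 8 * c" by (simp add: algebra_simps)

lemma riesz:
  fixes f :: "'a::chilbert_space \<Rightarrow> complex"
  assumes add: "\<And>x y. f (x + y) = f x + f y"
    and sc: "\<And>a x. f (scaleC a x) = a * f x"
    and bd: "\<And>x. cmod (f x) \<le> K * cnorm x"
  shows "\<exists>z. \<forall>x. f x = cinner x z"
proof (cases "\<forall>x. f x = 0")
  case True then show ?thesis by (intro exI[of _ 0]) simp
next
  case False
  then obtain x0 where x0: "f x0 \<noteq> 0" by blast
  have f0: "f 0 = 0" using sc[of 0 0] by simp
  have fdiff: "\<And>x y. f (x - y) = f x - f y"
    using add by (metis add_diff_cancel_right' diff_add_cancel eq_diff_eq)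
  define S where "S = {cmod (f x) | x. cnorm x \<le> 1}"
  define N where "N = Sup S"
  have "cmod (f 0) \<in> S" unfolding S_def by (rule CollectI, rule exI[of _ 0]) simp
  then have Sne: "S \<noteq> {}" by blast
  have Sbdd: "bdd_above S"
  proof (rule bdd_aboveI)
    fix s assume "s \<in> S"
    then obtain x where x: "s = cmod (f x)" "cnorm x \<le> 1" unfolding S_def by blast
    have "K * cnorm x \<le> \<bar>K\<bar> * cnorm x" by (simp add: mult_right_mono)
    also have "\<dots> \<le> \<bar>K\<bar>" using x(2) by (simp add: mult_left_le)
    finally show "s \<le> \<bar>K\<bar>" using bd[of x] x(1) by linarith
  qed
  have Sle: "\<And>x. cnorm x \<le> 1 \<Longrightarrow> cmod (f x) \<le> N"
    unfolding N_def by (rule cSup_upper[OF _ Sbdd]) (auto simp: S_def)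
  have fle: "cmod (f x) \<le> N * cnorm x" for x
  proof (cases "x = 0")
    case True then show ?thesis by (simp add: f0)
  next
    case False
    define c where "c = cnorm x"
    have c0: "c > 0" using False cnorm_eq_0[of x] cnorm_ge0[of x] unfolding c_def by linarith
    define y where "y = scaleC (complex_of_real (1/c)) x"
    have "cnorm y = 1" using c0 by (simp add: y_def cnorm_scaleC c_def[symmetric] norm_divide)
    then have "cmod (f y) \<le> N" by (intro Sle) simp
    moreover have "cmod (f y) = cmod (f x) / c" using c0 by (simp add: y_def sc norm_mult norm_divide)
    ultimately show ?thesis using c0 unfolding c_def[symmetric] by (simp add: field_simps)
  qed
  have Npos: "N > 0"
  proof (rule ccontr)
    assume "\<not> N > 0"
    then have "N * cnorm x0 \<le> 0" by (simp add: mult_nonpos_nonneg)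
    then show False using fle[of x0] x0 by (metis norm_le_zero_iff order_trans)
  qed
  have approx: "\<exists>x. cnorm x \<le> 1 \<and> f x = complex_of_real (cmod (f x)) \<and> N - inverse (real (Suc n)) < cmod (f x)" for n
  proof -
    have "N - inverse (real (Suc n)) < Sup S" unfolding N_def[symmetric] by simp
    then obtain s where "s \<in> S" "N - inverse (real (Suc n)) < s" using less_cSup_iff[OF Sne Sbdd] by blast
    then obtain x where x: "cnorm x \<le> 1" "N - inverse (real (Suc n)) < cmod (f x)" unfolding S_def by blast
    define w where "w = cnj (f x) / complex_of_real (cmod (f x))"
    define x' where "x' = scaleC w x"
    have fx': "f x' = complex_of_real (cmod (f x))"
    proof -
      have "f x' = cnj (f x) * f x / complex_of_real (cmod (f x))" by (simp add: x'_def sc w_def)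
      also have "cnj (f x) * f x = complex_of_real ((cmod (f x))^2)"
        by (subst complex_norm_square) (rule mult.commute)
      finally show ?thesis by (cases "f x = 0") (simp_all add: power2_eq_square)
    qed
    have "cmod w \<le> 1" by (simp add: w_def norm_divide divide_le_eq_1)
    then have "cnorm x' \<le> 1" using x(1) by (simp add: x'_def cnorm_scaleC mult_le_one)
    moreover have "cmod (f x') = cmod (f x)" by (simp add: fx')
    ultimately show ?thesis using fx' x(2) by (intro exI[of _ x']) simp
  qed
  then obtain X where X: "\<And>n. cnorm (X n) \<le> 1 \<and> f (X n) = complex_of_real (cmod (f (X n))) \<and> N - inverse (real (Suc n)) < cmod (f (X n))"
    by metis
  define r where "r n = cmod (f (X n))" for n
  have Xn: "cnorm (X n) \<le> 1" for n using X by blast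
  have fX: "f (X n) = complex_of_real (r n)" for n using X[of n] by (simp add: r_def)
  have rlow: "N - inverse (real (Suc n)) < r n" for n using X[of n] by (simp add: r_def)
  have rup: "r n \<le> N" for n unfolding r_def using Sle Xn by blast
  have r0: "0 \<le> r n" for n unfolding r_def by simp
  define eps where "eps n m = (inverse (real (Suc n)) + inverse (real (Suc m))) / N" for n m
  have cauchy_bd: "(cnorm (X n - X m))^2 \<le> 4 * eps n m" for n m
  proof -
    define g where "g = (r n + r m) / N"
    have "f (X n + X m) = complex_of_real (r n + r m)" by (simp add: add fX)
    then have "cmod (f (X n + X m)) = r n + r m" using r0[of n] r0[of m]
      by (metis abs_of_nonneg add_nonneg_nonneg norm_of_real)
    then have "r n + r m \<le> N * cnorm (X n + X m)" using fle[of "X n + X m"] by simp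
    then have g1: "g \<le> cnorm (X n + X m)" using Npos by (simp add: g_def field_simps)
    have g0: "0 \<le> g" using r0[of n] r0[of m] Npos by (simp add: g_def)
    have g2: "g \<le> 2" using rup[of n] rup[of m] Npos by (simp add: g_def field_simps)
    have h1: "2*N - r n - r m \<le> inverse (real (Suc n)) + inverse (real (Suc m))"
      using rlow[of n] rlow[of m] by linarith
    have h2: "2 - g = (2*N - r n - r m) / N" using Npos by (simp add: g_def field_simps)
    have g3: "2 - g \<le> eps n m" unfolding h2 eps_def using h1 Npos by (simp add: divide_right_mono)
    have "g^2 \<le> (cnorm (X n + X m))^2" using g0 g1 by (simp add: power_mono)
    moreover have "(cnorm (X n))^2 \<le> 1" "(cnorm (X m))^2 \<le> 1" using Xn by (simp_all add: power_le_one)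
    moreover note parallelogram[of "X n" "X m"]
    ultimately have "(cnorm (X n - X m))^2 \<le> 4 - g^2" by linarith
    also have "4 - g^2 = (2 - g) * (2 + g)" by (simp add: power2_eq_square algebra_simps)
    also have "\<dots> \<le> eps n m * (2 + g)" using g3 g0 by (simp add: mult_right_mono)
    also have "\<dots> \<le> eps n m * 4" using g2 g3 g0 by (intro mult_left_mono) linarith+
    finally show ?thesis by simp
  qed
  have "\<exists>L. (\<lambda>n. sqrt (Re (cinner (X n - L) (X n - L)))) \<longlonglongrightarrow> 0"
  proof (rule cinner_complete, intro allI impI)
    fix e :: real assume e: "e > 0"
    obtain M :: nat where M: "8 / (N * e^2) < real M" using reals_Archimedean2 by blast
    show "\<exists>M. \<forall>m\<ge>M. \<forall>n\<ge>M. sqrt (Re (cinner (X m - X n) (X m - X n))) < e"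
    proof (intro exI[of _ M] allI impI)
      fix m n assume mn: "M \<le> m" "M \<le> n"
      have i1: "inverse (real (Suc m)) \<le> inverse (real (Suc M))" using mn by (simp add: le_imp_inverse_le)
      have i2: "inverse (real (Suc n)) \<le> inverse (real (Suc M))" using mn by (simp add: le_imp_inverse_le)
      have "4 * (inverse (real (Suc m)) + inverse (real (Suc n))) \<le> 8 * inverse (real (Suc M))"
        using i1 i2 by (rule aux48)
      then have "4 * eps m n \<le> 8 * inverse (real (Suc M)) / N"
        unfolding eps_def times_divide_eq_right using Npos by (intro divide_right_mono) simp_all
      also have "\<dots> < e^2"
      proof -
        have "8 / (N * e^2) < real (Suc M)" using M by simp
        then have "8 < real (Suc M) * (N * e^2)" using Npos e by (simp add: field_simps)
        moreover have P: "0 < real (Suc M) * N" using Npos by simp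
        moreover have eq: "8 * inverse (real (Suc M)) / N = 8 / (real (Suc M) * N)" by (simp add: divide_inverse)
        moreover have "e^2 * (real (Suc M) * N) = real (Suc M) * (N * e^2)" by (simp add: ac_simps)
        ultimately have "8 < e^2 * (real (Suc M) * N)" by argo
        then show ?thesis unfolding eq using P by (simp only: pos_divide_less_eq)
      qed
      finally have "(cnorm (X m - X n))^2 < e^2" using cauchy_bd[of m n] by linarith
      then have "cnorm (X m - X n) < e" using e by (simp add: power_less_imp_less_base)
      then show "sqrt (Re (cinner (X m - X n) (X m - X n))) < e" by (simp add: cnorm_def)
    qed
  qed
  then obtain L where L: "(\<lambda>n. cnorm (X n - L)) \<longlonglongrightarrow> 0" unfolding cnorm_def[symmetric] by blast
  have Lnorm: "cnorm L \<le> 1"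
  proof -
    have "(\<lambda>n. 1 + cnorm (X n - L)) \<longlonglongrightarrow> 1 + 0" by (intro tendsto_add tendsto_const L)
    moreover have "cnorm L \<le> 1 + cnorm (X n - L)" for n
    proof -
      have "cnorm L = cnorm (X n - (X n - L))" by simp
      also have "\<dots> \<le> cnorm (X n) + cnorm (X n - L)" by (rule cnorm_diff_triangle)
      finally show ?thesis using Xn[of n] by linarith
    qed
    ultimately show ?thesis by (intro LIMSEQ_le_const) auto
  qed
  have fL: "f L = complex_of_real N"
  proof -
    have b: "cmod (f L - complex_of_real N) \<le> \<bar>K\<bar> * cnorm (X n - L) + inverse (real (Suc n))" for n
    proof -
      have "f L - complex_of_real N = (f L - f (X n)) + complex_of_real (r n - N)" by (simp add: fX)
      then have "cmod (f L - complex_of_real N) \<le> cmod (f (L - X n)) + \<bar>r n - N\<bar>"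
        by (metis fdiff norm_of_real norm_triangle_ineq)
      moreover have "cmod (f (L - X n)) \<le> \<bar>K\<bar> * cnorm (X n - L)"
        using bd[of "L - X n"] cnorm_sub_commute[of L "X n"]
        by (metis abs_ge_self cnorm_ge0 mult_right_mono order_trans)
      moreover have "\<bar>r n - N\<bar> \<le> inverse (real (Suc n))" using rlow[of n] rup[of n] by linarith
      ultimately show ?thesis by linarith
    qed
    have "(\<lambda>n. \<bar>K\<bar> * cnorm (X n - L) + inverse (real (Suc n))) \<longlonglongrightarrow> \<bar>K\<bar> * 0 + 0"
      by (intro tendsto_add tendsto_mult tendsto_const L LIMSEQ_inverse_real_of_nat)
    then have "cmod (f L - complex_of_real N) \<le> 0" using b by (intro LIMSEQ_le_const) auto
    then show ?thesis by simp
  qed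
  have L1: "cnorm L = 1"
  proof -
    have "N \<le> N * cnorm L" using fle[of L] fL Npos by simp
    then show ?thesis using Lnorm Npos by (simp add: field_simps)
  qed
  have orth: "cinner x L = 0" if fx: "f x = 0" for x
  proof -
    define c where "c = cinner x L"
    define q where "q = (cmod c)^2"
    define a where "a = (cnorm x)^2"
    define s where "s = 1 / (a + 1)"
    have a0: "0 \<le> a" by (simp add: a_def)
    have s0: "0 < s" using a0 by (simp add: s_def)
    have sa: "s * a \<le> 1" using a0 by (simp add: s_def field_simps)
    define t where "t = - complex_of_real s * cnj c"
    define y where "y = L + scaleC t x"
    have "f y = complex_of_real N" by (simp add: y_def add sc fx fL)
    then have "N \<le> N * cnorm y" using fle[of y] by simp
    then have "1 \<le> cnorm y" using Npos by (simp add: field_simps)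
    then have y1: "1 \<le> (cnorm y)^2" by (simp add: one_le_power)
    have Lx: "cinner L (scaleC t x) = - complex_of_real (s * q)"
    proof -
      have "cinner L (scaleC t x) = cnj t * cinner L x" by (simp add: cinner_scaleC_right)
      also have "cinner L x = cnj c" unfolding c_def by (rule cinner_commute)
      also have "cnj t * cnj c = - complex_of_real s * (c * cnj c)" by (simp add: t_def)
      also have "c * cnj c = complex_of_real q" unfolding q_def by (metis complex_norm_square of_real_power)
      finally show ?thesis by simp
    qed
    have tx: "(cnorm (scaleC t x))^2 = s^2 * q * a"
      by (simp add: cnorm_scaleC t_def power_mult_distrib norm_mult q_def a_def)
    have "(cnorm y)^2 = 1 + 2 * Re (cinner L (scaleC t x)) + (cnorm (scaleC t x))^2"
      using cinner_expand_sq[of L "scaleC t x"] cnorm_sq[of y] L1 by (simp add: y_def)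
    also have "\<dots> = 1 - 2 * s * q + s * q * (s * a)" using Lx tx by (simp add: power2_eq_square)
    finally have "0 \<le> - 2 * s * q + s * q * (s * a)" using y1 by linarith
    moreover have "s * q * (s * a) \<le> s * q" using sa s0 q_def by (simp add: mult_left_le)
    ultimately have "s * q \<le> 0" by linarith
    then have "q \<le> 0" using s0 by (simp add: mult_le_0_iff)
    then show ?thesis using q_def c_def by simp
  qed
  have rep: "f x = cinner x (scaleC (complex_of_real N) L)" for x
  proof -
    define v where "v = x - scaleC (f x / complex_of_real N) L"
    have "f v = 0" using Npos by (simp add: v_def fdiff sc fL)
    then have "cinner v L = 0" by (rule orth)
    then have "cinner x L = f x / complex_of_real N * cinner L L"
      by (simp add: v_def cinner_diff_left cinner_scaleC_left)
    moreover have "cinner L L = 1" using L1 by (simp add: cinner_self_cnorm)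
    ultimately show ?thesis using Npos by (simp add: cinner_scaleC_right)
  qed
  then show ?thesis by blast
qed



lemma cbl_add: "cbounded_linear A \<Longrightarrow> A (x + y) = A x + A y"
  by (simp add: cbounded_linear_def)
lemma cbl_scale: "cbounded_linear A \<Longrightarrow> A (scaleC a x) = scaleC a (A x)"
  by (simp add: cbounded_linear_def)
lemma cbl_zero: "cbounded_linear A \<Longrightarrow> A 0 = 0"
  using cbl_scale[of A 0 0] by simp
lemma cbl_diff: "cbounded_linear A \<Longrightarrow> A (x - y) = A x - A y"
  using cbl_add[of A "x - y" y] by (simp add: eq_diff_eq)
lemma cbl_bound: "cbounded_linear A \<Longrightarrow> \<exists>K\<ge>0. \<forall>x. cnorm (A x) \<le> K * cnorm x"
proof -
  assume "cbounded_linear A"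
  then obtain K where K: "\<forall>x. cnorm (A x) \<le> K * cnorm x" by (auto simp: cbounded_linear_def)
  have "cnorm (A x) \<le> max K 0 * cnorm x" for x
    using K[rule_format, of x] by (metis cnorm_ge0 max.cobounded1 mult_right_mono order_trans)
  then show ?thesis by (intro exI[of _ "max K 0"]) auto
qed

lemma cblI:
  assumes "\<And>x y. A (x + y) = A x + A y" "\<And>a x. A (scaleC a x) = scaleC a (A x)"
    "\<And>x. cnorm (A x) \<le> K * cnorm x"
  shows "cbounded_linear A"
  using assms unfolding cbounded_linear_def by blast

lemma sq_le_lemma:
  fixes c K d :: real
  assumes "c^2 \<le> K * d * c" "0 \<le> c" "0 \<le> K * d"
  shows "c \<le> K * d"
proof (cases "c = 0")
  case True
  then show ?thesis using assms by simp
next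
  case False
  then have "c > 0" using assms by simp
  then show ?thesis using assms(1) by (simp add: power2_eq_square)
qed

lemma adj_ex:
  fixes A :: "'a::chilbert_space \<Rightarrow> 'a"
  assumes "cbounded_linear A"
  shows "\<exists>A'. \<forall>x y. cinner (A x) y = cinner x (A' y)"
proof -
  obtain K where K: "K \<ge> 0" "\<And>x. cnorm (A x) \<le> K * cnorm x" using cbl_bound[OF assms] by blast
  have "\<forall>y. \<exists>z. \<forall>x. cinner (A x) y = cinner x z"
  proof
    fix y
    show "\<exists>z. \<forall>x. cinner (A x) y = cinner x z"
    proof (rule riesz[where K = "K * cnorm y"])
      fix x1 x2 show "cinner (A (x1 + x2)) y = cinner (A x1) y + cinner (A x2) y"
        by (simp add: cbl_add[OF assms] cinner_add_left)
    next
      fix a x show "cinner (A (scaleC a x)) y = a * cinner (A x) y"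
        by (simp add: cbl_scale[OF assms] cinner_scaleC_left)
    next
      fix x
      have "cmod (cinner (A x) y) \<le> cnorm (A x) * cnorm y" by (rule cauchy_schwarz)
      also have "\<dots> \<le> K * cnorm x * cnorm y" using K(2)[of x] by (simp add: mult_right_mono)
      finally show "cmod (cinner (A x) y) \<le> K * cnorm y * cnorm x" by (simp add: ac_simps)
    qed
  qed
  then show ?thesis by metis
qed

lemma adj_prop:
  fixes A :: "'a::chilbert_space \<Rightarrow> 'a"
  assumes "cbounded_linear A"
  shows "cinner (A x) y = cinner x (adj A y)"
proof -
  have ex1: "\<exists>!A'. \<forall>x y. cinner (A x) y = cinner x (A' y)"
  proof -
    obtain A' where A': "\<forall>x y. cinner (A x) y = cinner x (A' y)" using adj_ex[OF assms] by blast
    moreover have "A'' = A'" if "\<forall>x y. cinner (A x) y = cinner x (A'' y)" for A''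
    proof
      fix y show "A'' y = A' y" by (rule cinner_ext_right) (metis that A')
    qed
    ultimately show ?thesis by blast
  qed
  show ?thesis unfolding adj_def using theI'[OF ex1] by blast
qed

lemma adj_left:
  fixes A :: "'a::chilbert_space \<Rightarrow> 'a"
  assumes "cbounded_linear A"
  shows "cinner (adj A y) x = cinner y (A x)"
  using adj_prop[OF assms, of x y] cinner_commute[of "adj A y" x] cinner_commute[of y "A x"] by simp

lemma adj_add:
  fixes A :: "'a::chilbert_space \<Rightarrow> 'a"
  assumes "cbounded_linear A"
  shows "adj A (y + z) = adj A y + adj A z"
  by (rule cinner_ext_right) (simp add: adj_prop[OF assms, symmetric] cinner_add_right)

lemma adj_scale:
  fixes A :: "'a::chilbert_space \<Rightarrow> 'a"
  assumes "cbounded_linear A"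
  shows "adj A (scaleC a y) = scaleC a (adj A y)"
  by (rule cinner_ext_right) (simp add: adj_prop[OF assms, symmetric] cinner_scaleC_right)

lemma adj_diff:
  fixes A :: "'a::chilbert_space \<Rightarrow> 'a"
  assumes "cbounded_linear A"
  shows "adj A (y - z) = adj A y - adj A z"
  by (rule cinner_ext_right) (simp add: adj_prop[OF assms, symmetric] cinner_diff_right)

lemma adj_cbl:
  fixes A :: "'a::chilbert_space \<Rightarrow> 'a"
  assumes "cbounded_linear A"
  shows "cbounded_linear (adj A)"
proof -
  obtain K where K: "K \<ge> 0" "\<And>x. cnorm (A x) \<le> K * cnorm x" using cbl_bound[OF assms] by blast
  show ?thesis
proof (rule cblI[where K=K])
  show "adj A (x + y) = adj A x + adj A y" for x y by (rule adj_add[OF assms])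
  show "adj A (scaleC a x) = scaleC a (adj A x)" for a x by (rule adj_scale[OF assms])
  fix y
  let ?v = "adj A y"
  have "(cnorm ?v)^2 = Re (cinner (A ?v) y)" by (simp add: cnorm_sq adj_prop[OF assms])
  also have "\<dots> \<le> cmod (cinner (A ?v) y)" by (rule complex_Re_le_cmod)
  also have "\<dots> \<le> cnorm (A ?v) * cnorm y" by (rule cauchy_schwarz)
  also have "\<dots> \<le> K * cnorm ?v * cnorm y" using K(2)[of ?v] by (simp add: mult_right_mono)
  finally have "(cnorm ?v)^2 \<le> K * cnorm y * cnorm ?v" by (simp add: ac_simps)
  then show "cnorm ?v \<le> K * cnorm y" by (rule sq_le_lemma) (simp_all add: K(1))
qed
qed

lemma cbl_plus:
  assumes "cbounded_linear A" "cbounded_linear B"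
  shows "cbounded_linear (\<lambda>x. A x + B x)"
proof -
  obtain K1 where K1: "\<And>x. cnorm (A x) \<le> K1 * cnorm x" using cbl_bound[OF assms(1)] by blast
  obtain K2 where K2: "\<And>x. cnorm (B x) \<le> K2 * cnorm x" using cbl_bound[OF assms(2)] by blast
  show ?thesis
proof (rule cblI[where K="K1+K2"])
  show "A (x + y) + B (x + y) = A x + B x + (A y + B y)" for x y
    by (simp add: cbl_add[OF assms(1)] cbl_add[OF assms(2)] algebra_simps)
  show "A (scaleC a x) + B (scaleC a x) = scaleC a (A x + B x)" for a x
    by (simp add: cbl_scale[OF assms(1)] cbl_scale[OF assms(2)] scaleC_add_right)
  fix x show "cnorm (A x + B x) \<le> (K1 + K2) * cnorm x"
    using cnorm_triangle[of "A x" "B x"] K1[of x] K2[of x] by (simp add: distrib_right)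
qed
qed

lemma cbl_minus:
  assumes "cbounded_linear A" "cbounded_linear B"
  shows "cbounded_linear (\<lambda>x. A x - B x)"
proof -
  obtain K1 where K1: "\<And>x. cnorm (A x) \<le> K1 * cnorm x" using cbl_bound[OF assms(1)] by blast
  obtain K2 where K2: "\<And>x. cnorm (B x) \<le> K2 * cnorm x" using cbl_bound[OF assms(2)] by blast
  show ?thesis
proof (rule cblI[where K="K1+K2"])
  show "A (x + y) - B (x + y) = A x - B x + (A y - B y)" for x y
    by (simp add: cbl_add[OF assms(1)] cbl_add[OF assms(2)] algebra_simps)
  show "A (scaleC a x) - B (scaleC a x) = scaleC a (A x - B x)" for a x
    by (simp add: cbl_scale[OF assms(1)] cbl_scale[OF assms(2)] scaleC_diff_right)
  fix x show "cnorm (A x - B x) \<le> (K1 + K2) * cnorm x"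
    using cnorm_diff_triangle[of "A x" "B x"] K1[of x] K2[of x] by (simp add: distrib_right)
qed
qed

lemma op_set_bdd:
  assumes "cbounded_linear A"
  shows "bdd_above {cnorm (A x) | x. cnorm x \<le> 1}"
proof -
  obtain K where K: "K \<ge> 0" "\<And>x. cnorm (A x) \<le> K * cnorm x" using cbl_bound[OF assms] by blast
  show ?thesis
  proof (rule bdd_aboveI)
    fix s assume "s \<in> {cnorm (A x) | x. cnorm x \<le> 1}"
    then obtain x where x: "s = cnorm (A x)" "cnorm x \<le> 1" by blast
    have "K * cnorm x \<le> K" using x(2) K(1) by (simp add: mult_left_le)
    then show "s \<le> K" using K(2)[of x] x(1) by linarith
  qed
qed

lemma op_upper:
  assumes "cbounded_linear A" "cnorm x \<le> 1"
  shows "cnorm (A x) \<le> opnorm A"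
  unfolding opnorm_def by (rule cSup_upper[OF _ op_set_bdd[OF assms(1)]]) (use assms(2) in blast)

lemma op_least:
  assumes "\<And>x. cnorm x \<le> 1 \<Longrightarrow> cnorm (A x) \<le> M"
  shows "opnorm A \<le> M"
  unfolding opnorm_def
proof (rule cSup_least)
  show "{cnorm (A x) |x. cnorm x \<le> 1} \<noteq> {}" by (rule ex_in_conv[THEN iffD1], rule exI[of _ "cnorm (A 0)"],
       rule CollectI, rule exI[of _ 0]) simp
  show "\<And>s. s \<in> {cnorm (A x) |x. cnorm x \<le> 1} \<Longrightarrow> s \<le> M" using assms by blast
qed

lemma op_nonneg:
  assumes "cbounded_linear A"
  shows "0 \<le> opnorm A"
proof -
  have "cnorm (A 0) \<le> opnorm A" by (rule op_upper[OF assms]) simp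
  then show ?thesis using cnorm_ge0[of "A 0"] by linarith
qed

lemma op_le:
  assumes "cbounded_linear A"
  shows "cnorm (A x) \<le> opnorm A * cnorm x"
proof (cases "x = 0")
  case True then show ?thesis by (simp add: cbl_zero[OF assms])
next
  case False
  define c where "c = cnorm x"
  have c0: "c > 0" using False cnorm_eq_0[of x] cnorm_ge0[of x] unfolding c_def by linarith
  define y where "y = scaleC (complex_of_real (1/c)) x"
  have "cnorm y = 1" using c0 by (simp add: y_def cnorm_scaleC c_def[symmetric] norm_divide)
  then have "cnorm (A y) \<le> opnorm A" by (intro op_upper[OF assms]) simp
  moreover have "cnorm (A y) = cnorm (A x) / c" using c0
    by (simp add: y_def cbl_scale[OF assms] cnorm_scaleC norm_divide)
  ultimately show ?thesis using c0 unfolding c_def[symmetric] by (simp add: field_simps)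
qed

lemma op_le_from_inner:
  assumes "\<And>y z. cnorm y \<le> 1 \<Longrightarrow> cnorm z \<le> 1 \<Longrightarrow> cmod (cinner (A y) z) \<le> M"
  shows "opnorm A \<le> M"
proof (rule op_least)
  fix y :: 'a assume y: "cnorm y \<le> 1"
  show "cnorm (A y) \<le> M"
  proof (cases "A y = 0")
    case True then show ?thesis using assms[OF y, of 0] by simp
  next
    case False
    define c where "c = cnorm (A y)"
    have c0: "c > 0" using False cnorm_eq_0[of "A y"] cnorm_ge0[of "A y"] unfolding c_def by linarith
    define z where "z = scaleC (complex_of_real (1/c)) (A y)"
    have "cnorm z = 1" using c0 by (simp add: z_def cnorm_scaleC c_def[symmetric] norm_divide)
    then have "cmod (cinner (A y) z) \<le> M" using assms[OF y] by simp
    moreover have "cinner (A y) z = complex_of_real c"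
      using c0 by (simp add: z_def cinner_scaleC_right cinner_self_cnorm c_def[symmetric] power2_eq_square)
    ultimately show ?thesis using c0 unfolding c_def by simp
  qed
qed

lemma adj_like_bound:
  fixes A :: "'a::complex_inner_space \<Rightarrow> 'a"
  assumes "cbounded_linear A" "\<And>u. cinner v u = cinner w (A u)"
  shows "cnorm v \<le> opnorm A * cnorm w"
proof -
  have "(cnorm v)^2 = Re (cinner w (A v))" by (simp add: cnorm_sq assms(2))
  also have "\<dots> \<le> cmod (cinner w (A v))" by (rule complex_Re_le_cmod)
  also have "\<dots> \<le> cnorm w * cnorm (A v)" by (rule cauchy_schwarz)
  also have "\<dots> \<le> cnorm w * (opnorm A * cnorm v)" by (simp add: mult_left_mono op_le[OF assms(1)])
  finally have "(cnorm v)^2 \<le> opnorm A * cnorm w * cnorm v" by (simp add: ac_simps)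
  then show ?thesis by (rule sq_le_lemma) (simp_all add: op_nonneg[OF assms(1)])
qed

lemma cnorm_double: "cnorm (v + v) = 2 * cnorm (v::'a::complex_inner_space)"
proof -
  have "v + v = scaleC 2 v" using scaleC_add_left[of 1 1 v] by (simp add: scaleC_one)
  then show ?thesis by (simp add: cnorm_scaleC)
qed

lemma cnorm_prod_sq: "(cnorm ((p, q)::'a::complex_inner_space \<times> 'a))^2 = (cnorm p)^2 + (cnorm q)^2"
  by (simp add: cnorm_sq cinner_prod_def)



lemma unit_rot: "cmod (cnj a / complex_of_real (cmod a)) \<le> 1"
  by (simp add: norm_divide divide_le_eq_1)

lemma rot_mult: "cnj a / complex_of_real (cmod a) * a = complex_of_real (cmod a)"
proof -
  have "cnj a * a = complex_of_real ((cmod a)^2)" by (subst complex_norm_square) (rule mult.commute)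
  then show ?thesis by (cases "a = 0") (simp_all add: power2_eq_square)
qed

theorem mainTheorem5:
  fixes B C :: "'h::chilbert_space \<Rightarrow> 'h"
  assumes "cbounded_linear B" and "cbounded_linear C"
    and "(numrad (opmatrix (\<lambda>_. 0) B C (\<lambda>_. 0)))\<^sup>2 =
         1/4 * max (opnorm (\<lambda>x. adj B (B x) + C (adj C x)))
                   (opnorm (\<lambda>x. B (adj B x) + adj C (C x)))"
  shows "opnorm (\<lambda>x. B x + adj C x) = opnorm (\<lambda>x. B x - adj C x)"
proof -
  note bB = assms(1) and bC = assms(2)
  define T where "T = opmatrix (\<lambda>_. 0) B C (\<lambda>_. 0)"
  define w where "w = numrad T"
  define S where "S = (\<lambda>x. B x + adj C x)"
  define D where "D = (\<lambda>x. B x - adj C x)"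
  define s where "s = opnorm S"
  define d where "d = opnorm D"
  have bCs: "cbounded_linear (adj C)" by (rule adj_cbl[OF bC])
  have bBs: "cbounded_linear (adj B)" by (rule adj_cbl[OF bB])
  have bS: "cbounded_linear S" unfolding S_def by (rule cbl_plus[OF bB bCs])
  have bD: "cbounded_linear D" unfolding D_def by (rule cbl_minus[OF bB bCs])
  have s0: "0 \<le> s" unfolding s_def by (rule op_nonneg[OF bS])
  have d0: "0 \<le> d" unfolding d_def by (rule op_nonneg[OF bD])
  have Tpq: "T (p, q) = (B q, C p)" for p q by (simp add: T_def opmatrix_def)
  obtain KB where KB: "KB \<ge> 0" "\<And>x. cnorm (B x) \<le> KB * cnorm x" using cbl_bound[OF bB] by blast
  obtain KC where KC: "KC \<ge> 0" "\<And>x. cnorm (C x) \<le> KC * cnorm x" using cbl_bound[OF bC] by blast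
  have comp_le: "cnorm p \<le> 1" "cnorm q \<le> 1" if "cnorm (p, q) \<le> 1" for p q :: 'h
  proof -
    have "(cnorm (p,q))^2 \<le> 1" using that by (simp add: power_le_one)
    then have "(cnorm p)^2 + (cnorm q)^2 \<le> 1" unfolding cnorm_prod_sq .
    then have "(cnorm p)^2 \<le> 1" "(cnorm q)^2 \<le> 1"
      using zero_le_power2[of "cnorm p"] zero_le_power2[of "cnorm q"] by linarith+
    then show "cnorm p \<le> 1" "cnorm q \<le> 1" by (simp_all add: power_le_one_iff)
  qed
  have Wbdd: "bdd_above {cmod (cinner (T x) x) | x. cnorm x \<le> 1}"
  proof (rule bdd_aboveI)
    fix r assume "r \<in> {cmod (cinner (T x) x) | x. cnorm x \<le> 1}"
    then obtain p q where pq: "r = cmod (cinner (T (p,q)) (p,q))" "cnorm (p,q) \<le> 1" by auto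
    have p1: "cnorm p \<le> 1" and q1: "cnorm q \<le> 1" using comp_le[OF pq(2)] by auto
    have "cinner (T (p,q)) (p,q) = cinner (B q) p + cinner (C p) q" by (simp add: Tpq cinner_prod_def)
    then have "r \<le> cmod (cinner (B q) p) + cmod (cinner (C p) q)" using pq(1) by (simp add: norm_triangle_ineq)
    moreover have "cmod (cinner (B q) p) \<le> KB"
    proof -
      have "cmod (cinner (B q) p) \<le> cnorm (B q) * cnorm p" by (rule cauchy_schwarz)
      also have "\<dots> \<le> cnorm (B q)" using p1 by (simp add: mult_left_le)
      also have "\<dots> \<le> KB * cnorm q" by (rule KB(2))
      also have "\<dots> \<le> KB" using q1 KB(1) by (simp add: mult_left_le)
      finally show ?thesis .
    qed
    moreover have "cmod (cinner (C p) q) \<le> KC"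
    proof -
      have "cmod (cinner (C p) q) \<le> cnorm (C p) * cnorm q" by (rule cauchy_schwarz)
      also have "\<dots> \<le> cnorm (C p)" using q1 by (simp add: mult_left_le)
      also have "\<dots> \<le> KC * cnorm p" by (rule KC(2))
      also have "\<dots> \<le> KC" using p1 KC(1) by (simp add: mult_left_le)
      finally show ?thesis .
    qed
    ultimately show "r \<le> KB + KC" by linarith
  qed
  have w_ge: "cmod (cinner (T x) x) \<le> w" if "cnorm x \<le> 1" for x
    unfolding w_def numrad_def by (rule cSup_upper[OF _ Wbdd]) (use that in blast)
  have key: "cmod (om * cinner (B y) z + cnj (om * cinner (adj C y) z)) \<le> 2 * w"
    if y1: "cnorm y \<le> 1" and z1: "cnorm z \<le> 1" and om: "cmod om \<le> 1" for y z om
  proof -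
    define h where "h = complex_of_real (sqrt (1/2))"
    have "h * h = complex_of_real (sqrt (1/2) * sqrt (1/2))" by (simp only: h_def of_real_mult)
    also have "\<dots> = complex_of_real (1/2)" by simp
    finally have hh: "h * h = 1/2" by simp
    have ch: "cnj h = h" by (simp add: h_def)
    have mh: "(cmod h)^2 = 1/2" by (simp add: h_def)
    define x where "x = (scaleC h z, scaleC (h * om) y)"
    have "(cnorm x)^2 = (cmod h)^2 * (cnorm z)^2 + (cmod h)^2 * (cmod om)^2 * (cnorm y)^2"
      by (simp add: x_def cnorm_prod_sq cnorm_scaleC power_mult_distrib norm_mult)
    also have "\<dots> \<le> 1/2 * 1 + 1/2 * 1 * 1"
      unfolding mh using y1 z1 om
      by (intro add_mono mult_mono mult_left_mono power_le_one) simp_all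
    finally have "(cnorm x)^2 \<le> 1" by simp
    then have x1: "cnorm x \<le> 1" by (simp add: power_le_one_iff)
    have CzY: "cinner (C z) y = cnj (cinner (adj C y) z)"
      using adj_prop[OF bC, of z y] cinner_commute[of z "adj C y"] by simp
    have "cinner (T x) x = cinner (B (scaleC (h * om) y)) (scaleC h z) + cinner (C (scaleC h z)) (scaleC (h * om) y)"
      by (simp add: x_def Tpq cinner_prod_def)
    also have "\<dots> = (h * om) * cnj h * cinner (B y) z + h * cnj (h * om) * cinner (C z) y"
      by (simp add: cbl_scale[OF bB] cbl_scale[OF bC] cinner_scaleC_left cinner_scaleC_right)
    also have "\<dots> = (h * h) * (om * cinner (B y) z + cnj (om * cinner (adj C y) z))"
      by (simp add: ch CzY algebra_simps)
    finally have eqT: "cinner (T x) x = (1/2) * (om * cinner (B y) z + cnj (om * cinner (adj C y) z))"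
      by (simp only: hh)
    have "cmod (cinner (T x) x) = cmod (om * cinner (B y) z + cnj (om * cinner (adj C y) z)) / 2"
      unfolding eqT by (simp add: norm_mult)
    with w_ge[OF x1] show ?thesis by simp
  qed
  have w0: "0 \<le> w" using key[of 0 0 1] by simp
  have sw: "s \<le> 2 * w" unfolding s_def
  proof (rule op_le_from_inner)
    fix y z :: 'h assume y1: "cnorm y \<le> 1" and z1: "cnorm z \<le> 1"
    define a where "a = cinner (B y) z"
    define b where "b = cinner (adj C y) z"
    have ab: "cinner (S y) z = a + b" by (simp add: S_def a_def b_def cinner_add_left)
    define om where "om = cnj (a + b) / complex_of_real (cmod (a + b))"
    have "cmod (a + b) = Re (om * (a + b))" unfolding om_def rot_mult by simp
    also have "\<dots> = Re (om * a + cnj (om * b))" by (simp add: algebra_simps)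
    also have "\<dots> \<le> cmod (om * a + cnj (om * b))" by (rule complex_Re_le_cmod)
    also have "\<dots> \<le> 2 * w" unfolding a_def b_def by (rule key[OF y1 z1]) (unfold om_def, rule unit_rot)
    finally show "cmod (cinner (S y) z) \<le> 2 * w" by (simp add: ab)
  qed
  have dw: "d \<le> 2 * w" unfolding d_def
  proof (rule op_le_from_inner)
    fix y z :: 'h assume y1: "cnorm y \<le> 1" and z1: "cnorm z \<le> 1"
    define a where "a = cinner (B y) z"
    define b where "b = cinner (adj C y) z"
    have ab: "cinner (D y) z = a - b" by (simp add: D_def a_def b_def cinner_diff_left)
    define om where "om = \<i> * (cnj (a - b) / complex_of_real (cmod (a - b)))"
    have "cmod (a - b) = Im (om * (a - b))" unfolding om_def mult.assoc rot_mult by simp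
    also have "\<dots> = Im (om * a + cnj (om * b))" by (simp add: algebra_simps)
    also have "\<dots> \<le> cmod (om * a + cnj (om * b))" using abs_Im_le_cmod by (rule order_trans[OF abs_ge_self])
    also have "\<dots> \<le> 2 * w" unfolding a_def b_def
      by (rule key[OF y1 z1]) (unfold om_def norm_mult norm_ii mult_1_left, rule unit_rot)
    finally show "cmod (cinner (D y) z) \<le> 2 * w" by (simp add: ab)
  qed
  have Ss: "cnorm (adj B v + C v) \<le> s * cnorm v" for v
    unfolding s_def
  proof (rule adj_like_bound[OF bS])
    fix u show "cinner (adj B v + C v) u = cinner v (S u)"
      by (simp add: S_def cinner_add_left cinner_add_right adj_left[OF bB] adj_prop[OF bC])
  qed
  have Ds: "cnorm (adj B v - C v) \<le> d * cnorm v" for v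
    unfolding d_def
  proof (rule adj_like_bound[OF bD])
    fix u show "cinner (adj B v - C v) u = cinner v (D u)"
      by (simp add: D_def cinner_diff_left cinner_diff_right adj_left[OF bB] adj_prop[OF bC])
  qed
  have Sle: "cnorm (S x) \<le> s" if "cnorm x \<le> 1" for x
    unfolding s_def by (rule op_upper[OF bS that])
  have Dle: "cnorm (D x) \<le> d" if "cnorm x \<le> 1" for x
    unfolding d_def by (rule op_upper[OF bD that])
  have P: "opnorm (\<lambda>x. adj B (B x) + C (adj C x)) \<le> (s^2 + d^2) / 2"
  proof (rule op_least)
    fix x :: 'h assume x1: "cnorm x \<le> 1"
    define v where "v = adj B (B x) + C (adj C x)"
    have "v + v = (adj B (S x) + C (S x)) + (adj B (D x) - C (D x))"
      by (simp add: v_def S_def D_def adj_add[OF bB] adj_diff[OF bB] cbl_add[OF bC] cbl_diff[OF bC] algebra_simps)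
    then have "2 * cnorm v \<le> cnorm (adj B (S x) + C (S x)) + cnorm (adj B (D x) - C (D x))"
      using cnorm_triangle by (metis cnorm_double)
    also have "\<dots> \<le> s * cnorm (S x) + d * cnorm (D x)" by (intro add_mono Ss Ds)
    also have "\<dots> \<le> s * s + d * d" using Sle[OF x1] Dle[OF x1] s0 d0 by (intro add_mono mult_left_mono)
    finally show "cnorm v \<le> (s^2 + d^2) / 2" by (simp add: power2_eq_square)
  qed
  have Q: "opnorm (\<lambda>x. B (adj B x) + adj C (C x)) \<le> (s^2 + d^2) / 2"
  proof (rule op_least)
    fix x :: 'h assume x1: "cnorm x \<le> 1"
    define v where "v = B (adj B x) + adj C (C x)"
    have "v + v = S (adj B x + C x) + D (adj B x - C x)"
      by (simp add: v_def S_def D_def adj_add[OF bC] adj_diff[OF bC] cbl_add[OF bB] cbl_diff[OF bB] algebra_simps)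
    then have "2 * cnorm v \<le> cnorm (S (adj B x + C x)) + cnorm (D (adj B x - C x))"
      using cnorm_triangle by (metis cnorm_double)
    also have "\<dots> \<le> s * cnorm (adj B x + C x) + d * cnorm (adj B x - C x)"
      unfolding s_def d_def by (intro add_mono op_le[OF bS] op_le[OF bD])
    also have "\<dots> \<le> s * s + d * d"
    proof (intro add_mono mult_left_mono s0 d0)
      show "cnorm (adj B x + C x) \<le> s" using Ss[of x] x1 s0 by (metis mult_left_le order_trans)
      show "cnorm (adj B x - C x) \<le> d" using Ds[of x] x1 d0 by (metis mult_left_le order_trans)
    qed
    finally show "cnorm v \<le> (s^2 + d^2) / 2" by (simp add: power2_eq_square)
  qed
  have hyp: "w^2 = 1/4 * max (opnorm (\<lambda>x. adj B (B x) + C (adj C x))) (opnorm (\<lambda>x. B (adj B x) + adj C (C x)))"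
    using assms(3) unfolding w_def T_def .
  have M: "4 * w^2 \<le> (s^2 + d^2) / 2" using hyp P Q by simp
  have "(s/2)^2 \<le> w^2" using sw s0 by (intro power_mono) simp_all
  then have s2: "s^2 \<le> 4 * w^2" by (simp add: power_divide)
  have "(d/2)^2 \<le> w^2" using dw d0 by (intro power_mono) simp_all
  then have d2: "d^2 \<le> 4 * w^2" by (simp add: power_divide)
  have M2: "8 * w^2 \<le> s^2 + d^2" using M by simp
  have "s^2 = d^2" using M2 s2 d2 by linarith
  then have "s = d" using s0 d0 by (simp add: power2_eq_iff_nonneg)
  then show ?thesis unfolding s_def d_def S_def D_def .
qed


end
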